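(* In the transactional panorama model with the lenses and metrics described in the context, for every lens $A$ among LCNB, LCMB, ICNB, $k$-GCNB, $k$-LCNB, $k$-LCMB we have $S(\mathrm{GCPB}) \le S(A) \le S(\mathrm{GCNB})$ and $I(\mathrm{GCPB}) \ge I(A) \ge I(\mathrm{GCNB})$.
   Context: A view graph is a DAG on a set $N$ of nodes (source data and views). Write transactions are processed one at a time; write transaction $w^{t_i}$ creates version $G^{t_i}$ with state set $V^{t_i}$ containing, for each node $n_k$, either its computed new result $v_k^{t_i}$, a placeholder $UC_k^{t_i}$ if $w^{t_i}$ updates $n_k$ but has not yet computed it, or its result from the previous version if $n_k$ is not updated. A version is committed once all its new results are computed; at any time there is the committed graph (most recently committed version, no UCs) and the latest graph (version of the most recent write transaction). Read transactions $r^{s_1},\dots,r^{s_m}$ each read the views in the current viewport and return immediately a set $H^{s_i}$ of states (results or UCs); $Time(r^{s_i})$ is its return time. A returned state's timestamp is that of its version. Lenses (rules for answering reads): GCPB returns the viewport states from the latest graph. GCNB returns them from the committed graph. LCNB returns them from the more recent of the committed and latest graphs that has zero UCs for the viewport. LCMB: if reading either the committed or the latest graph preserves monotonicity (no view gets a state with smaller timestamp than previously read), behave like LCNB; otherwise read the latest graph. ICNB returns, for each view independently, its most recently computed result. $k$-GCNB reads the latest graph if it has at most $k$ UCs in total, otherwise the committed graph. $k$-LCNB reads the more recent of the committed and latest graphs having at most $k$ UCs for the viewport. $k$-LCMB: if reading either graph preserves monotonicity, behave like $k$-LCNB; otherwise read the latest graph. Metrics for $R=\{r^{s_1},\dots,r^{s_m}\}$: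 invisibility $I(R)=\sum_{i=1}^{m-1}|H^{s_i}_{UC}|\,(Time(r^{s_{i+1}})-Time(r^{s_i}))$ where $H^{s_i}_{UC}$ is the set of UCs in $H^{s_i}$; staleness $S(R)=\sum_{i=1}^{m-1}\sum_{v_k^{t_j}\in H^{s_i}_{qr}}\mathbf{1}[v_k^{t_j}\notin V^{t_i}]\,(Time(r^{s_{i+1}})-Time(r^{s_i}))$ where $H^{s_i}_{qr}$ is the set of view results (non-UC states) in $H^{s_i}$ and $G^{t_i}$ is the latest version before $r^{s_i}$ starts. $S(A)$, $I(A)$ denote these metrics under lens $A$, where all lenses are compared on the same write transactions, the same order of computing new view results, and the same sequence of read transactions. *)

theory Defs
  imports Main "HOL.Real"
begin

text \<open>Write transactions are numbered 1..nW; version 0 is the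
  initial (committed) view graph whose results all exist.  Reads are numbered 1..nR.\<close>

record 'n scen =
  nW       :: nat
  upd      :: "nat \<Rightarrow> 'n set"       \<comment> \<open>nodes updated by write j\<close>
  wstart   :: "nat \<Rightarrow> real"        \<comment> \<open>time at which write j (version j) is created\<close>
  ctime    :: "'n \<Rightarrow> nat \<Rightarrow> real"  \<comment> \<open>time at which new result v_n^j is computed\<close>
  nR       :: nat
  rtime    :: "nat \<Rightarrow> real"        \<comment> \<open>Time(r^{s_i}) (reads return immediately)\<close>
  viewport :: "nat \<Rightarrow> 'n set"

text \<open>Well-formedness: versions created in order; a result is computed after its write is
  created; writes are processed one at a time (every new result of an earlier write is
  computed strictly before every new result of a later write); read times nondecreasing.\<close>

definition valid_scen :: "'n scen \<Rightarrow> bool" where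
  "valid_scen s \<longleftrightarrow>
     (\<forall>j j'. 1 \<le> j \<and> j \<le> j' \<and> j' \<le> nW s \<longrightarrow> wstart s j \<le> wstart s j') \<and>
     (\<forall>j n. 1 \<le> j \<and> j \<le> nW s \<and> n \<in> upd s j \<longrightarrow> wstart s j \<le> ctime s n j) \<and>
     (\<forall>j j' n n'. 1 \<le> j \<and> j < j' \<and> j' \<le> nW s \<and> n \<in> upd s j \<and> n' \<in> upd s j'
        \<longrightarrow> ctime s n j < ctime s n' j') \<and>
     (\<forall>i i'. 1 \<le> i \<and> i \<le> i' \<and> i' \<le> nR s \<longrightarrow> rtime s i \<le> rtime s i')"

datatype 'n state = Res 'n nat | UC 'n nat

fun is_uc :: "'n state \<Rightarrow> bool" where
  "is_uc (Res _ _) = False" | "is_uc (UC _ _) = True"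

text \<open>Timestamp of a state = timestamp of the write transaction that created it.\<close>
fun ts :: "'n state \<Rightarrow> nat" where
  "ts (Res _ l) = l" | "ts (UC _ l) = l"

definition latest :: "'n scen \<Rightarrow> real \<Rightarrow> nat" where
  "latest s t = Max {j. j \<le> nW s \<and> (j = 0 \<or> (1 \<le> j \<and> wstart s j \<le> t))}"

text \<open>Version j is committed at time t: it exists and all new results of it (and, since writes
  are processed one at a time, of all earlier writes) have been computed.\<close>
definition committed_at :: "'n scen \<Rightarrow> nat \<Rightarrow> real \<Rightarrow> bool" where
  "committed_at s j t \<longleftrightarrow> j \<le> latest s t \<and>
     (\<forall>l n. 1 \<le> l \<and> l \<le> j \<and> n \<in> upd s l \<longrightarrow> ctime s n l \<le> t)"

definition committed :: "'n scen \<Rightarrow> real \<Rightarrow> nat" where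
  "committed s t = Max {j. committed_at s j t}"

text \<open>Most recent write (\<le> j) that updates node n (0 = initial result).\<close>
definition lu :: "'n scen \<Rightarrow> nat \<Rightarrow> 'n \<Rightarrow> nat" where
  "lu s j n = Max {l. l \<le> j \<and> (l = 0 \<or> n \<in> upd s l)}"

definition gstate :: "'n scen \<Rightarrow> nat \<Rightarrow> real \<Rightarrow> 'n \<Rightarrow> 'n state" where
  "gstate s j t n = (let l = lu s j n in
     if l = 0 \<or> ctime s n l \<le> t then Res n l else UC n l)"

definition vstates :: "'n scen \<Rightarrow> nat \<Rightarrow> real \<Rightarrow> 'n state set" where
  "vstates s j t = range (gstate s j t)"

definition uc_vp :: "'n scen \<Rightarrow> nat \<Rightarrow> real \<Rightarrow> 'n set \<Rightarrow> nat" where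
  "uc_vp s j t P = card {n \<in> P. is_uc (gstate s j t n)}"

definition uc_total :: "'n scen \<Rightarrow> nat \<Rightarrow> real \<Rightarrow> nat" where
  "uc_total s j t = card {n. is_uc (gstate s j t n)}"

text \<open>Most recently computed result of node n at time t (its version index).\<close>
definition computed_versions :: "'n scen \<Rightarrow> 'n \<Rightarrow> real \<Rightarrow> nat set" where
  "computed_versions s n t =
     {0} \<union> {l. 1 \<le> l \<and> l \<le> nW s \<and> n \<in> upd s l \<and> ctime s n l \<le> t}"

definition mrc :: "'n scen \<Rightarrow> 'n \<Rightarrow> real \<Rightarrow> nat" where
  "mrc s n t = (THE l. l \<in> computed_versions s n t \<and>
      (\<forall>l' \<in> computed_versions s n t. l' \<noteq> l \<longrightarrow>
          l' = 0 \<or> (l \<noteq> 0 \<and> ctime s n l' < ctime s n l)))"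

datatype lens = GCPB | GCNB | LCNB | LCMB | ICNB
  | kGCNB nat | kLCNB nat | kLCMB nat

text \<open>k-LCNB choice of graph (LCNB is k = 0): the more recent of committed/latest graphs
  having at most k UCs in the viewport (the committed graph has none).\<close>
definition lc_graph :: "'n scen \<Rightarrow> nat \<Rightarrow> nat \<Rightarrow> nat" where
  "lc_graph s k i = (let t = rtime s i in
     if uc_vp s (latest s t) t (viewport s i) \<le> k then latest s t else committed s t)"

definition gc_graph :: "'n scen \<Rightarrow> nat \<Rightarrow> nat \<Rightarrow> nat" where
  "gc_graph s k i = (let t = rtime s i in
     if uc_total s (latest s t) t \<le> k then latest s t else committed s t)"

text \<open>Reading graph j at read i preserves monotonicity w.r.t. the previous answers
  prev (prev ! (i'-1) is the answer of read i').\<close>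
definition mono_ok :: "'n scen \<Rightarrow> ('n \<Rightarrow> 'n state) list \<Rightarrow> nat \<Rightarrow> nat \<Rightarrow> bool" where
  "mono_ok s prev i j \<longleftrightarrow> (\<forall>n \<in> viewport s i. \<forall>i'. 1 \<le> i' \<and> i' < i \<and> n \<in> viewport s i'
      \<longrightarrow> ts ((prev ! (i' - 1)) n) \<le> ts (gstate s j (rtime s i) n))"

fun mb_answers :: "'n scen \<Rightarrow> nat \<Rightarrow> nat \<Rightarrow> ('n \<Rightarrow> 'n state) list" where
  "mb_answers s k 0 = []"
| "mb_answers s k (Suc i) = (let prev = mb_answers s k i; t = rtime s (Suc i);
      L = latest s t; C = committed s t;
      g = (if mono_ok s prev (Suc i) C \<and> mono_ok s prev (Suc i) L
           then lc_graph s k (Suc i) else L)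
    in prev @ [gstate s g t])"

fun answer :: "'n scen \<Rightarrow> lens \<Rightarrow> nat \<Rightarrow> 'n \<Rightarrow> 'n state" where
  "answer s GCPB i = gstate s (latest s (rtime s i)) (rtime s i)"
| "answer s GCNB i = gstate s (committed s (rtime s i)) (rtime s i)"
| "answer s LCNB i = gstate s (lc_graph s 0 i) (rtime s i)"
| "answer s (kLCNB k) i = gstate s (lc_graph s k i) (rtime s i)"
| "answer s (kGCNB k) i = gstate s (gc_graph s k i) (rtime s i)"
| "answer s LCMB i = mb_answers s 0 i ! (i - 1)"
| "answer s (kLCMB k) i = mb_answers s k i ! (i - 1)"
| "answer s ICNB i = (\<lambda>n. Res n (mrc s n (rtime s i)))"

definition H :: "'n scen \<Rightarrow> lens \<Rightarrow> nat \<Rightarrow> 'n state set" where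
  "H s A i = answer s A i ` viewport s i"

definition invisibility :: "'n scen \<Rightarrow> lens \<Rightarrow> real" where
  "invisibility s A = (\<Sum>i\<in>{1..<nR s}.
     real (card {x \<in> H s A i. is_uc x}) * (rtime s (i + 1) - rtime s i))"

definition staleness :: "'n scen \<Rightarrow> lens \<Rightarrow> real" where
  "staleness s A = (\<Sum>i\<in>{1..<nR s}.
     (\<Sum>x\<in>{x \<in> H s A i. \<not> is_uc x}.
        (if x \<notin> vstates s (latest s (rtime s i)) (rtime s i) then 1 else 0))
     * (rtime s (i + 1) - rtime s i))"

end

theory Submission
  imports Defs
begin

fun nodeof :: "'n state \<Rightarrow> 'n" where
  "nodeof (Res n _) = n" | "nodeof (UC n _) = n"

lemma nodeof_gstate[simp]: "nodeof (gstate s j t n) = n"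
  by (simp add: gstate_def Let_def)

lemma vstates_iff: "x \<in> vstates s j t \<longleftrightarrow> x = gstate s j t (nodeof x)"
  unfolding vstates_def by (auto simp: image_iff)

lemma latest_fin: "finite {j. j \<le> nW s \<and> (j = 0 \<or> (1 \<le> j \<and> wstart s j \<le> t))}"
  by (rule finite_subset[of _ "{..nW s}"]) auto

lemma latest_le: "latest s t \<le> nW s"
  unfolding latest_def using latest_fin[of s t]
  by (subst Max_le_iff) auto

lemma latest_ge: "1 \<le> l \<Longrightarrow> l \<le> nW s \<Longrightarrow> wstart s l \<le> t \<Longrightarrow> l \<le> latest s t"
  unfolding latest_def using latest_fin[of s t]
  by (intro Max_ge) auto

lemma committed_in: "committed_at s (committed s t) t"
proof -
  have f: "finite {j. committed_at s j t}"
    by (rule finite_subset[of _ "{..nW s}"]) (use latest_le[of s t] in \<open>auto simp: committed_at_def\<close>)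
  have "committed_at s 0 t" by (simp add: committed_at_def)
  then show ?thesis unfolding committed_def using f
    by (metis (mono_tags) Max_in empty_iff mem_Collect_eq)
qed

lemma lu_in: "lu s j n \<le> j \<and> (lu s j n = 0 \<or> n \<in> upd s (lu s j n))"
proof -
  have f: "finite {l. l \<le> j \<and> (l = 0 \<or> n \<in> upd s l)}"
    by (rule finite_subset[of _ "{..j}"]) auto
  have "lu s j n \<in> {l. l \<le> j \<and> (l = 0 \<or> n \<in> upd s l)}"
    unfolding lu_def by (rule Max_in[OF f]) auto
  then show ?thesis by simp
qed

lemma lu_ge: "l \<le> j \<Longrightarrow> n \<in> upd s l \<Longrightarrow> l \<le> lu s j n"
proof -
  assume a: "l \<le> j" "n \<in> upd s l"
  have f: "finite {l. l \<le> j \<and> (l = 0 \<or> n \<in> upd s l)}"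
    by (rule finite_subset[of _ "{..j}"]) auto
  show ?thesis unfolding lu_def using f a by (intro Max_ge) auto
qed

lemma committed_nouc: "\<not> is_uc (gstate s (committed s t) t n)"
proof -
  let ?C = "committed s t"
  have c: "committed_at s ?C t" by (rule committed_in)
  have l: "lu s ?C n \<le> ?C \<and> (lu s ?C n = 0 \<or> n \<in> upd s (lu s ?C n))" by (rule lu_in)
  have "lu s ?C n = 0 \<or> ctime s n (lu s ?C n) \<le> t"
    using c l unfolding committed_at_def by (metis le0 le_neq_implies_less less_one not_le)
  then show ?thesis by (auto simp: gstate_def Let_def)
qed

lemma mrc_eq:
  assumes v: "valid_scen s" and nu: "\<not> is_uc (gstate s (latest s t) t n)"
  shows "mrc s n t = lu s (latest s t) n"
proof -
  let ?L = "latest s t"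
  let ?l0 = "lu s ?L n"
  let ?cv = "computed_versions s n t"
  have l0: "?l0 \<le> ?L \<and> (?l0 = 0 \<or> n \<in> upd s ?l0)" by (rule lu_in)
  have l0c: "?l0 = 0 \<or> ctime s n ?l0 \<le> t"
    using nu by (auto simp: gstate_def Let_def split: if_splits)
  have v2a: "\<forall>j n. 1 \<le> j \<and> j \<le> nW s \<and> n \<in> upd s j \<longrightarrow> wstart s j \<le> ctime s n j"
    using v unfolding valid_scen_def by (elim conjE)
  have v3a: "\<forall>j j' n n'. 1 \<le> j \<and> j < j' \<and> j' \<le> nW s \<and> n \<in> upd s j \<and> n' \<in> upd s j'
        \<longrightarrow> ctime s n j < ctime s n' j'"
    using v unfolding valid_scen_def by (elim conjE)
  have v2: "\<And>j n. 1 \<le> j \<Longrightarrow> j \<le> nW s \<Longrightarrow> n \<in> upd s j \<Longrightarrow> wstart s j \<le> ctime s n j"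
    using v2a by simp
  have v3: "\<And>j j' n n'. 1 \<le> j \<Longrightarrow> j < j' \<Longrightarrow> j' \<le> nW s \<Longrightarrow> n \<in> upd s j \<Longrightarrow> n' \<in> upd s j'
        \<Longrightarrow> ctime s n j < ctime s n' j'"
    using v3a by simp
  have cvle: "\<And>l. l \<in> ?cv \<Longrightarrow> l \<le> ?l0"
  proof -
    fix l assume "l \<in> ?cv"
    then consider "l = 0" | "1 \<le> l" "l \<le> nW s" "n \<in> upd s l" "ctime s n l \<le> t"
      unfolding computed_versions_def by auto
    then show "l \<le> ?l0"
    proof cases
      case 2
      then have "wstart s l \<le> t" using v2[of l n] by linarith
      then have "l \<le> ?L" by (rule latest_ge[OF 2(1) 2(2)])
      then show ?thesis by (rule lu_ge[OF _ 2(3)])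
    qed simp
  qed
  have cvu: "\<And>l. l \<in> ?cv \<Longrightarrow> l = 0 \<or> (1 \<le> l \<and> l \<le> nW s \<and> n \<in> upd s l)"
    unfolding computed_versions_def by auto
  have l0in: "?l0 \<in> ?cv"
    using l0 l0c latest_le[of s t] unfolding computed_versions_def by auto
  have l0nw: "?l0 \<le> nW s" using l0 latest_le[of s t] by linarith
  show ?thesis unfolding mrc_def
  proof (rule the_equality)
    show "?l0 \<in> ?cv \<and> (\<forall>l'\<in>?cv. l' \<noteq> ?l0 \<longrightarrow> l' = 0 \<or> ?l0 \<noteq> 0 \<and> ctime s n l' < ctime s n ?l0)"
    proof (intro conjI l0in ballI impI)
      fix l' assume a: "l' \<in> ?cv" "l' \<noteq> ?l0"
      show "l' = 0 \<or> ?l0 \<noteq> 0 \<and> ctime s n l' < ctime s n ?l0"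
      proof (cases "l' = 0")
        case False
        then have "1 \<le> l'" "n \<in> upd s l'" using cvu[OF a(1)] by auto
        moreover have "l' < ?l0" using cvle[OF a(1)] a(2) by simp
        moreover then have "n \<in> upd s ?l0" using l0 by auto
        ultimately show ?thesis using v3[of l' ?l0 n n] l0nw by auto
      qed simp
    qed
  next
    fix l assume a: "l \<in> ?cv \<and> (\<forall>l'\<in>?cv. l' \<noteq> l \<longrightarrow> l' = 0 \<or> l \<noteq> 0 \<and> ctime s n l' < ctime s n l)"
    show "l = ?l0"
    proof (rule ccontr)
      assume ne: "l \<noteq> ?l0"
      have "l \<le> ?l0" using cvle a by blast
      then have lt: "l < ?l0" using ne by linarith
      then have l0nz: "?l0 \<noteq> 0" by simp
      have allp: "\<forall>l'\<in>?cv. l' \<noteq> l \<longrightarrow> l' = 0 \<or> l \<noteq> 0 \<and> ctime s n l' < ctime s n l"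
        using a by (rule conjunct2)
      have ne2: "?l0 \<noteq> l" using ne by simp
      have "?l0 = 0 \<or> (l \<noteq> 0 \<and> ctime s n ?l0 < ctime s n l)"
        by (rule mp[OF bspec[OF allp l0in] ne2])
      then have h: "l \<noteq> 0 \<and> ctime s n ?l0 < ctime s n l" using l0nz by blast
      have "l = 0 \<or> (1 \<le> l \<and> l \<le> nW s \<and> n \<in> upd s l)" using cvu a by blast
      then have "1 \<le> l" "n \<in> upd s l" using h by auto
      moreover have "n \<in> upd s ?l0" using l0 \<open>?l0 \<noteq> 0\<close> by auto
      ultimately have "ctime s n l < ctime s n ?l0" using v3[of l ?l0 n n] lt l0nw by auto
      then show False using h by simp
    qed
  qed
qed

lemma mb_len: "length (mb_answers s k i) = i"
  by (induction i) (auto simp: Let_def)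

lemma mb_last:
  assumes "1 \<le> i"
  shows "mb_answers s k i ! (i - 1) = gstate s (latest s (rtime s i)) (rtime s i) \<or>
         mb_answers s k i ! (i - 1) = gstate s (committed s (rtime s i)) (rtime s i)"
proof -
  obtain j where j: "i = Suc j" using assms by (cases i) auto
  show ?thesis unfolding j using mb_len[of s k j]
    by (auto simp: Let_def nth_append lc_graph_def)
qed

lemma answer_cases:
  assumes "A \<in> {LCNB, LCMB, ICNB} \<union> range kGCNB \<union> range kLCNB \<union> range kLCMB" and "1 \<le> i"
  shows "answer s A i = gstate s (latest s (rtime s i)) (rtime s i) \<or>
         answer s A i = gstate s (committed s (rtime s i)) (rtime s i) \<or> A = ICNB"
proof -
  have "A = LCMB \<or> (\<exists>k. A = kLCMB k) \<or> A \<in> {LCNB, ICNB} \<union> range kGCNB \<union> range kLCNB"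
    using assms(1) by auto
  then show ?thesis
  proof (elim disjE exE)
    assume "A = LCMB" then show ?thesis using mb_last[OF assms(2), of s 0] by simp
  next
    fix k assume "A = kLCMB k" then show ?thesis using mb_last[OF assms(2), of s k] by simp
  next
    assume "A \<in> {LCNB, ICNB} \<union> range kGCNB \<union> range kLCNB"
    then show ?thesis by (auto simp: lc_graph_def gc_graph_def Let_def)
  qed
qed

lemma card_stale_le:
  fixes f g :: "'n \<Rightarrow> 'n state"
  assumes fin: "finite V" and g1: "\<forall>n\<in>V. \<not> is_uc (g n)" and g2: "\<forall>n\<in>V. g n \<in> W \<longrightarrow> f n \<in> W"
    and g3: "\<forall>n. nodeof (g n) = n"
  shows "card {x \<in> f`V. \<not> is_uc x \<and> x \<notin> W} \<le> card {x \<in> g`V. \<not> is_uc x \<and> x \<notin> W}"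
proof -
  have "{x \<in> f`V. \<not> is_uc x \<and> x \<notin> W} \<subseteq> f ` {n\<in>V. g n \<notin> W}" using g2 by auto
  then have "card {x \<in> f`V. \<not> is_uc x \<and> x \<notin> W} \<le> card (f ` {n\<in>V. g n \<notin> W})"
    using fin by (intro card_mono) auto
  also have "\<dots> \<le> card {n\<in>V. g n \<notin> W}" by (rule card_image_le) (use fin in auto)
  also have "\<dots> = card (g ` {n\<in>V. g n \<notin> W})"
    by (rule card_image[symmetric]) (metis g3 inj_onI)
  also have "g ` {n\<in>V. g n \<notin> W} = {x \<in> g`V. \<not> is_uc x \<and> x \<notin> W}" using g1 by auto
  finally show ?thesis .
qed

lemma sum_ind: "finite X \<Longrightarrow> (\<Sum>x\<in>{x \<in> X. P x}. (if x \<notin> W then 1 else 0)) = real (card {x\<in>X. P x \<and> x \<notin> W})"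
  by (simp add: sum.If_cases Int_def)



lemma per_read:
  fixes s :: "('n::finite) scen"
  assumes v: "valid_scen s"
    and A: "A \<in> {LCNB, LCMB, ICNB} \<union> range kGCNB \<union> range kLCNB \<union> range kLCMB"
    and i: "1 \<le> i"
  shows "card {x \<in> H s GCNB i. is_uc x} = 0"
    and "card {x \<in> H s A i. is_uc x} \<le> card {x \<in> H s GCPB i. is_uc x}"
    and "(\<Sum>x\<in>{x \<in> H s GCPB i. \<not> is_uc x}.
        (if x \<notin> vstates s (latest s (rtime s i)) (rtime s i) then 1 else (0::real))) = 0"
    and "(\<Sum>x\<in>{x \<in> H s A i. \<not> is_uc x}.
        (if x \<notin> vstates s (latest s (rtime s i)) (rtime s i) then 1 else (0::real))) \<le>
         (\<Sum>x\<in>{x \<in> H s GCNB i. \<not> is_uc x}.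
        (if x \<notin> vstates s (latest s (rtime s i)) (rtime s i) then 1 else (0::real)))"
proof -
  let ?t = "rtime s i"
  let ?L = "latest s ?t"
  let ?C = "committed s ?t"
  let ?V = "viewport s i"
  let ?W = "vstates s ?L ?t"
  have fin: "finite ?V" by simp
  show "card {x \<in> H s GCNB i. is_uc x} = 0"
  proof -
    have "{x \<in> H s GCNB i. is_uc x} = {}" using committed_nouc[of s ?t] by (auto simp: H_def)
    then show ?thesis by (metis card.empty)
  qed
  have inL: "\<And>n. gstate s ?L ?t n \<in> ?W" by (simp add: vstates_def)
  show "(\<Sum>x\<in>{x \<in> H s GCPB i. \<not> is_uc x}. (if x \<notin> ?W then 1 else (0::real))) = 0"
    using inL by (intro sum.neutral) (auto simp: H_def)
  have ic: "answer s ICNB i n \<in> ?W" if "gstate s ?C ?t n \<in> ?W" for n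
  proof -
    have e: "gstate s ?C ?t n = gstate s ?L ?t n" using that vstates_iff by (metis nodeof_gstate)
    then have nu: "\<not> is_uc (gstate s ?L ?t n)" using committed_nouc[of s ?t n] by simp
    then have "answer s ICNB i n = gstate s ?L ?t n"
      using mrc_eq[OF v nu] by (auto simp: gstate_def Let_def split: if_splits)
    then show ?thesis using inL by simp
  qed
  have cases: "answer s A i = gstate s ?L ?t \<or> answer s A i = gstate s ?C ?t \<or> A = ICNB"
    using answer_cases[OF A i] .
  have p1: "\<forall>n. is_uc (answer s A i n) \<longrightarrow> answer s A i n = gstate s ?L ?t n"
    using cases committed_nouc[of s ?t] by auto
  have p2: "\<forall>n\<in>?V. gstate s ?C ?t n \<in> ?W \<longrightarrow> answer s A i n \<in> ?W"
    using cases ic inL by auto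
  have "{x \<in> H s A i. is_uc x} \<subseteq> {x \<in> H s GCPB i. is_uc x}"
    using p1 by (auto simp: H_def)
  then show "card {x \<in> H s A i. is_uc x} \<le> card {x \<in> H s GCPB i. is_uc x}"
    by (intro card_mono) (auto simp: H_def)
  have "card {x \<in> answer s A i ` ?V. \<not> is_uc x \<and> x \<notin> ?W}
        \<le> card {x \<in> gstate s ?C ?t ` ?V. \<not> is_uc x \<and> x \<notin> ?W}"
    by (rule card_stale_le[OF fin]) (use committed_nouc[of s ?t] p2 in auto)
  then show "(\<Sum>x\<in>{x \<in> H s A i. \<not> is_uc x}. (if x \<notin> ?W then 1 else (0::real))) \<le>
         (\<Sum>x\<in>{x \<in> H s GCNB i. \<not> is_uc x}. (if x \<notin> ?W then 1 else (0::real)))"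
    by (simp add: sum_ind H_def)
qed

theorem theorem2p8:
  fixes s :: "('n::finite) scen" and A :: lens
  assumes "valid_scen s"
    and "A \<in> {LCNB, LCMB, ICNB} \<union> range kGCNB \<union> range kLCNB \<union> range kLCMB"
  shows "staleness s GCPB \<le> staleness s A \<and> staleness s A \<le> staleness s GCNB \<and>
         invisibility s GCPB \<ge> invisibility s A \<and> invisibility s A \<ge> invisibility s GCNB"
proof -
  have w: "rtime s (i + 1) - rtime s i \<ge> 0" if "i \<in> {1..<nR s}" for i
    using assms(1) that unfolding valid_scen_def by auto
  note pr = per_read[OF assms(1) assms(2)]
  have s1: "staleness s GCPB \<le> staleness s A"
    unfolding staleness_def using pr(3)
    by (intro sum_mono mult_right_mono w) (auto intro!: sum_nonneg)
  have s2: "staleness s A \<le> staleness s GCNB"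
    unfolding staleness_def using pr(4)
    by (intro sum_mono mult_right_mono w) auto
  have i1: "invisibility s GCPB \<ge> invisibility s A"
    unfolding invisibility_def using pr(2)
    by (intro sum_mono mult_right_mono w) auto
  have i2: "invisibility s A \<ge> invisibility s GCNB"
    unfolding invisibility_def using pr(1)
    by (intro sum_mono mult_right_mono w) auto
  show ?thesis using s1 s2 i1 i2 by simp
qed

end
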